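(* Let $W$ be the Weyl group of a connected reductive group $G$ over $\mathbb{C}$ with respect to a maximal torus $T$, acting on $\mathfrak{t}^*$ by the dot action $w\bullet\lambda=w(\lambda+\rho)-\rho$. Let $\mu_0,\dots,\mu_m\in\mathfrak{t}^*$ and let $\mathfrak{z}_0,\dots,\mathfrak{z}_m\subseteq\mathfrak{t}^*$ be vector subspaces. If $(\mu_0+\mathfrak{z}_0)/(W,\bullet)\subseteq\bigcup_{i=1}^m(\mu_i+\mathfrak{z}_i)/(W,\bullet)$, then there exist $1\le i_0\le m$ and $w_0\in W$ such that $\mathfrak{z}_0\subseteq w_0(\mathfrak{z}_{i_0})$.
   Context: $\rho\in\mathfrak{t}^*$ satisfies $\rho(h_\alpha)=1$ for all simple roots $\alpha$. For $V\subseteq\mathfrak{t}^*$, $V/(W,\bullet)$ denotes the image of $V$ under the quotient map $\mathfrak{t}^*\to\mathfrak{t}^*/(W,\bullet)$. *)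

theory Defs
  imports "HOL-Analysis.Analysis"
begin

text \<open>Model: t* = X*(T) \<otimes> C identified with complex^'n (coordinates w.r.t. a Z-basis of
the character lattice X*(T)); t = X_*(T) \<otimes> C likewise identified with complex^'n via the
dual basis, so the natural pairing is the standard bilinear pairing below.
A connected reductive group over C is determined by its (reduced) root datum; its Weyl
group is the group generated by the root reflections.\<close>

type_synonym 'n tdual = "complex ^ 'n"

definition pair :: "complex ^ 'n \<Rightarrow> complex ^ 'n \<Rightarrow> complex" where
  "pair lam h = (\<Sum>i\<in>UNIV. lam $ i * h $ i)"

definition csubspace :: "(complex ^ 'n) set \<Rightarrow> bool" where
  "csubspace S \<longleftrightarrow> 0 \<in> S \<and> (\<forall>x\<in>S. \<forall>y\<in>S. x + y \<in> S) \<and> (\<forall>c. \<forall>x\<in>S. c *s x \<in> S)"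

definition is_lattice_vec :: "complex ^ 'n \<Rightarrow> bool" where
  "is_lattice_vec v \<longleftrightarrow> (\<forall>i. v $ i \<in> \<int>)"

definition refl :: "complex ^ 'n \<Rightarrow> complex ^ 'n \<Rightarrow> complex ^ 'n \<Rightarrow> complex ^ 'n" where
  "refl alpha halpha lam = lam - pair lam halpha *s alpha"

definition corefl :: "complex ^ 'n \<Rightarrow> complex ^ 'n \<Rightarrow> complex ^ 'n \<Rightarrow> complex ^ 'n" where
  "corefl alpha halpha h = h - pair alpha h *s halpha"

definition reduced_root_datum ::
  "(complex ^ 'n) set \<Rightarrow> (complex ^ 'n \<Rightarrow> complex ^ 'n) \<Rightarrow> bool" where
  "reduced_root_datum Phi cor \<longleftrightarrow>
     finite Phi \<and> 0 \<notin> Phi \<and>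
     (\<forall>a\<in>Phi. is_lattice_vec a \<and> is_lattice_vec (cor a)) \<and>
     (\<forall>a\<in>Phi. pair a (cor a) = 2) \<and>
     (\<forall>a\<in>Phi. \<forall>b\<in>Phi. refl a (cor a) b \<in> Phi) \<and>
     (\<forall>a\<in>Phi. \<forall>b\<in>Phi. cor (refl a (cor a) b) = corefl a (cor a) (cor b)) \<and>
     (\<forall>a\<in>Phi. \<forall>c::complex. c *s a \<in> Phi \<longrightarrow> c = 1 \<or> c = -1)"

inductive_set weyl_group ::
  "(complex ^ 'n) set \<Rightarrow> (complex ^ 'n \<Rightarrow> complex ^ 'n)
     \<Rightarrow> (complex ^ 'n \<Rightarrow> complex ^ 'n) set"
  for Phi cor where
  weyl_id: "id \<in> weyl_group Phi cor"
| weyl_step: "w \<in> weyl_group Phi cor \<Longrightarrow> a \<in> Phi \<Longrightarrow> refl a (cor a) \<circ> w \<in> weyl_group Phi cor"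

definition is_base :: "(complex ^ 'n) set \<Rightarrow> (complex ^ 'n) set \<Rightarrow> bool" where
  "is_base Phi Delta \<longleftrightarrow> Delta \<subseteq> Phi \<and> finite Delta \<and>
     (\<forall>c. (\<Sum>a\<in>Delta. c a *s a) = 0 \<longrightarrow> (\<forall>a\<in>Delta. c a = 0)) \<and>
     (\<forall>b\<in>Phi. \<exists>k::complex ^ 'n \<Rightarrow> nat.
        b = (\<Sum>a\<in>Delta. of_nat (k a) *s a) \<or> b = - (\<Sum>a\<in>Delta. of_nat (k a) *s a))"

definition dot :: "complex ^ 'n \<Rightarrow> (complex ^ 'n \<Rightarrow> complex ^ 'n) \<Rightarrow> complex ^ 'n \<Rightarrow> complex ^ 'n" where
  "dot rho w lam = w (lam + rho) - rho"

text \<open>Image of lam in t*/(W,dot): its dot-orbit.\<close>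
definition dot_orbit ::
  "(complex ^ 'n \<Rightarrow> complex ^ 'n) set \<Rightarrow> complex ^ 'n \<Rightarrow> complex ^ 'n \<Rightarrow> (complex ^ 'n) set" where
  "dot_orbit W rho lam = {dot rho w lam | w. w \<in> W}"

definition affine_shift :: "complex ^ 'n \<Rightarrow> (complex ^ 'n) set \<Rightarrow> (complex ^ 'n) set" where
  "affine_shift mu Z = (\<lambda>x. mu + x) ` Z"

end

theory Submission
  imports Defs
begin

lemma key_cover:
  fixes p :: "'a::euclidean_space" and Z :: "'a set" and c :: "'k \<Rightarrow> 'a" and D :: "'k \<Rightarrow> 'a set"
  assumes Z: "subspace Z" and K: "countable K" and D: "\<forall>k\<in>K. subspace (D k)"
    and cov: "(\<lambda>x. p + x) ` Z \<subseteq> (\<Union>k\<in>K. (\<lambda>x. c k + x) ` D k)"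
  shows "\<exists>k\<in>K. Z \<subseteq> D k"
proof (rule ccontr)
  assume nz: "\<not> (\<exists>k\<in>K. Z \<subseteq> D k)"
  define A where "A = (\<lambda>x. p + x) ` Z"
  define B where "B k = (\<lambda>x. c k + x) ` D k" for k
  have pA: "p \<in> A" using Z unfolding A_def by (auto intro!: image_eqI[where x=0] subspace_0)
  then have Kne: "K \<noteq> {}" using cov unfolding A_def by auto
  have clA: "closed A" unfolding A_def using closed_translation[OF closed_subspace[OF Z], of p] by simp
  have clB: "closed (B k)" if "k \<in> K" for k
    unfolding B_def using closed_translation[OF closed_subspace, of "D k" "c k"] D that by simp
  have "A \<subseteq> closure (\<Inter>((\<lambda>k. A - B k) ` K))"
  proof (rule Baire[OF clA])
    show "countable ((\<lambda>k. A - B k) ` K)" using K by simp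
    fix T assume "T \<in> (\<lambda>k. A - B k) ` K"
    then obtain k where k: "k \<in> K" and T: "T = A - B k" by auto
    have "openin (top_of_set A) (A \<inter> - B k)"
      using clB[OF k] by (intro openin_open_Int) (simp add: open_Compl)
    moreover have "A \<inter> - B k = T" using T by auto
    moreover have "A \<subseteq> closure T"
    proof
      fix x assume xA: "x \<in> A"
      then obtain z where z: "z \<in> Z" and xz: "x = p + z" unfolding A_def by auto
      obtain v where vZ: "v \<in> Z" and vD: "v \<notin> D k" using nz k by auto
      have v0: "v \<noteq> 0" using vD D k subspace_0 by auto
      show "x \<in> closure T" unfolding closure_approachable
      proof (intro allI impI)
        fix e :: real assume e: "e > 0"
        define t where "t = e / (2 * norm v)"
        have nv: "norm v > 0" using v0 by simp
        have t: "t > 0" using e nv unfolding t_def by simp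
        have tn: "t * norm v < e" using e nv unfolding t_def by (simp add: field_simps)
        define y1 where "y1 = x + t *\<^sub>R v"
        define y2 where "y2 = x + (t/2) *\<^sub>R v"
        have y1A: "y1 \<in> A" unfolding y1_def xz A_def
          using z vZ Z by (auto intro!: image_eqI[where x="z + t *\<^sub>R v"] subspace_add subspace_scale)
        have y2A: "y2 \<in> A" unfolding y2_def xz A_def
          using z vZ Z by (auto intro!: image_eqI[where x="z + (t/2) *\<^sub>R v"] subspace_add subspace_scale)
        have d1: "dist y1 x < e" unfolding y1_def dist_norm using t tn by simp
        have d2: "dist y2 x < e" unfolding y2_def dist_norm using t tn e by simp
        have "\<not> (y1 \<in> B k \<and> y2 \<in> B k)"
        proof
          assume "y1 \<in> B k \<and> y2 \<in> B k"
          then obtain u1 u2 where u1: "u1 \<in> D k" "y1 = c k + u1" and u2: "u2 \<in> D k" "y2 = c k + u2"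
            unfolding B_def by auto
          have "y1 - y2 = t *\<^sub>R v - (t/2) *\<^sub>R v" unfolding y1_def y2_def by simp
          also have "\<dots> = (t - t/2) *\<^sub>R v" by (simp only: scaleR_diff_left)
          also have "\<dots> = (t/2) *\<^sub>R v" by simp
          also have "y1 - y2 = u1 - u2" using u1 u2 by simp
          finally have eq: "u1 - u2 = (t/2) *\<^sub>R v" .
          have "u1 - u2 \<in> D k" using u1 u2 D k by (simp add: subspace_diff)
          then have "(2/t) *\<^sub>R (u1 - u2) \<in> D k" using D k by (simp add: subspace_scale)
          moreover have "(2/t) *\<^sub>R (u1 - u2) = v" using eq t by simp
          ultimately show False using vD by simp
        qed
        then show "\<exists>y\<in>T. dist y x < e" using y1A y2A d1 d2 T by blast
      qed
    qed
    ultimately show "openin (top_of_set A) T \<and> A \<subseteq> closure T" by simp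
  qed
  moreover have "\<Inter>((\<lambda>k. A - B k) ` K) = {}"
    using cov Kne unfolding A_def B_def by blast
  ultimately show False using pA by simp
qed

lemma sc_comp: "(r *\<^sub>R (x::complex^'n)) $ i = complex_of_real r * x $ i"
  by (simp only: vector_scaleR_component) (simp add: scaleR_conv_of_real)

lemma sc_vec: "r *\<^sub>R (x::complex^'n) = complex_of_real r *s x"
  by (simp only: vec_eq_iff sc_comp) simp

lemma csub_sub: "csubspace S \<Longrightarrow> subspace S"
  unfolding csubspace_def subspace_def
proof (intro conjI ballI allI; (elim conjE)?)
  fix c :: real and x assume "\<forall>c. \<forall>x\<in>S. c *s x \<in> S" "x \<in> S"
  then have "complex_of_real c *s x \<in> S" by blast
  moreover have "complex_of_real c *s x = c *\<^sub>R x"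
    by (simp add: sc_vec)
  ultimately show "c *\<^sub>R x \<in> S" by simp
qed auto

lemma pair_add: "pair (x + y) h = pair x h + pair y h"
  unfolding pair_def by (simp add: distrib_right sum.distrib)

lemma pair_smult: "pair (c *s x) h = c * pair x h"
  unfolding pair_def by (simp add: sum_distrib_left mult.assoc)

lemma refl_linear: "linear (refl a h)"
proof (rule linearI)
  fix x y show "refl a h (x + y) = refl a h x + refl a h y"
    unfolding refl_def pair_add by (simp add: vec_eq_iff algebra_simps)
next
  fix r :: real and x show "refl a h (r *\<^sub>R x) = r *\<^sub>R refl a h x"
    unfolding sc_vec refl_def pair_smult by (simp add: vec_eq_iff algebra_simps)
qed

lemma weyl_linear: "w \<in> weyl_group Phi cor \<Longrightarrow> linear w"
proof (induction rule: weyl_group.induct)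
  case weyl_id show ?case by (rule linear_id)
next
  case (weyl_step w a) show ?case by (rule linear_compose[OF weyl_step.IH refl_linear])
qed

lemma weyl_countable:
  assumes "finite Phi" shows "countable (weyl_group Phi cor)"
proof -
  define F where "F l = foldr (\<lambda>a f. refl a (cor a) \<circ> f) l id" for l
  have "weyl_group Phi cor \<subseteq> F ` lists Phi"
  proof
    fix w assume "w \<in> weyl_group Phi cor"
    then show "w \<in> F ` lists Phi"
    proof (induction rule: weyl_group.induct)
      case weyl_id then show ?case by (auto simp: F_def intro!: image_eqI[where x="[]"])
    next
      case (weyl_step w a)
      then obtain l where "l \<in> lists Phi" "w = F l" by auto
      then show ?case using weyl_step by (auto simp: F_def intro!: image_eqI[where x="a # l"])
    qed
  qed
  moreover have "countable (lists Phi)" using assms by (simp add: countable_finite)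
  ultimately show ?thesis by (meson countable_image countable_subset)
qed

theorem lemma5p3:
  fixes Phi :: "(complex ^ 'n) set" and cor :: "complex ^ 'n \<Rightarrow> complex ^ 'n"
    and Delta :: "(complex ^ 'n) set" and rho :: "complex ^ 'n"
    and m :: nat and mu :: "nat \<Rightarrow> complex ^ 'n" and z :: "nat \<Rightarrow> (complex ^ 'n) set"
  assumes datum: "reduced_root_datum Phi cor"
    and base: "is_base Phi Delta"
    and rho: "\<forall>a\<in>Delta. pair rho (cor a) = 1"
    and subsp: "\<forall>i\<le>m. csubspace (z i)"
    and cover: "dot_orbit (weyl_group Phi cor) rho ` affine_shift (mu 0) (z 0)
                  \<subseteq> (\<Union>i\<in>{1..m}. dot_orbit (weyl_group Phi cor) rho ` affine_shift (mu i) (z i))"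
  shows "\<exists>i0\<in>{1..m}. \<exists>w0\<in>weyl_group Phi cor. z 0 \<subseteq> w0 ` z i0"
proof -
  let ?W = "weyl_group Phi cor"
  define K where "K = {1..m} \<times> ?W"
  define c where "c k = snd k (mu (fst k) + rho) - rho" for k :: "nat \<times> (complex ^ 'n \<Rightarrow> complex ^ 'n)"
  define D where "D k = snd k ` z (fst k)" for k :: "nat \<times> (complex ^ 'n \<Rightarrow> complex ^ 'n)"
  have finPhi: "finite Phi" using datum unfolding reduced_root_datum_def by simp
  have Kc: "countable K" unfolding K_def using weyl_countable[OF finPhi] by simp
  have Z: "subspace (z 0)" using subsp by (auto intro: csub_sub)
  have Dsub: "\<forall>k\<in>K. subspace (D k)"
  proof
    fix k assume "k \<in> K"
    then obtain i w where k: "k = (i, w)" "i \<le> m" "w \<in> ?W" unfolding K_def by auto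
    have "subspace (z i)" using subsp k by (auto intro: csub_sub)
    then show "subspace (D k)" unfolding D_def k
      using linear_subspace_image[OF weyl_linear[OF k(3)]] by simp
  qed
  have cov: "(\<lambda>x. mu 0 + x) ` z 0 \<subseteq> (\<Union>k\<in>K. (\<lambda>x. c k + x) ` D k)"
  proof
    fix x assume x: "x \<in> (\<lambda>x. mu 0 + x) ` z 0"
    then have "x \<in> affine_shift (mu 0) (z 0)" unfolding affine_shift_def .
    then have "dot_orbit ?W rho x \<in> dot_orbit ?W rho ` affine_shift (mu 0) (z 0)" by simp
    with cover obtain i y where i: "i \<in> {1..m}" and y: "y \<in> affine_shift (mu i) (z i)"
      and oe: "dot_orbit ?W rho x = dot_orbit ?W rho y" by blast
    have "x \<in> dot_orbit ?W rho x" unfolding dot_orbit_def dot_def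
      by (auto intro!: exI[where x=id] weyl_id)
    then have "x \<in> dot_orbit ?W rho y" using oe by simp
    then obtain w where w: "w \<in> ?W" and xw: "x = w (y + rho) - rho"
      unfolding dot_orbit_def dot_def by auto
    obtain v where v: "v \<in> z i" and yv: "y = mu i + v" using y unfolding affine_shift_def by auto
    have lw: "linear w" using weyl_linear[OF w] .
    have "x = c (i, w) + w v"
      unfolding xw yv c_def using linear_add[OF lw, of "mu i + rho" v]
      by (simp add: algebra_simps)
    moreover have "w v \<in> D (i, w)" unfolding D_def using v by simp
    moreover have "(i, w) \<in> K" unfolding K_def using i w by simp
    ultimately show "x \<in> (\<Union>k\<in>K. (\<lambda>x. c k + x) ` D k)" by blast
  qed
  obtain k where "k \<in> K" "z 0 \<subseteq> D k" using key_cover[OF Z Kc Dsub cov] by blast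
  then show ?thesis unfolding K_def D_def by fastforce
qed

end
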